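(* Let $G$ be a connected graph of order $n\geq 9$ with minimum degree $\delta(G)\geq\frac{n+k}{3}$ for some integer $k\geq 3$. Then $prc(G)=\chi'(G)$.
   Context: A path in an edge-coloured graph is a rainbow path if its edges receive pairwise distinct colours. The proper rainbow connection number $prc(G)$ of a connected graph is the minimum number of colours in a proper edge-colouring (adjacent edges get distinct colours) such that every two distinct vertices are joined by a rainbow path. $\chi'(G)$ is the chromatic index. *)

theory Defs
  imports Complex_Main
begin

definition simple_graph :: "'a set \<Rightarrow> 'a set set \<Rightarrow> bool" where
  "simple_graph V E \<longleftrightarrow> finite V \<and> (\<forall>e\<in>E. \<exists>u v. e = {u, v} \<and> u \<noteq> v \<and> u \<in> V \<and> v \<in> V)"

definition degree :: "'a set set \<Rightarrow> 'a \<Rightarrow> nat" where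
  "degree E v = card {u. {u, v} \<in> E}"

definition is_path :: "'a set \<Rightarrow> 'a set set \<Rightarrow> 'a list \<Rightarrow> bool" where
  "is_path V E p \<longleftrightarrow> p \<noteq> [] \<and> set p \<subseteq> V \<and> distinct p \<and>
     (\<forall>i. Suc i < length p \<longrightarrow> {p ! i, p ! Suc i} \<in> E)"

definition path_edges :: "'a list \<Rightarrow> 'a set list" where
  "path_edges p = map (\<lambda>i. {p ! i, p ! Suc i}) [0..<length p - 1]"

definition connected_graph :: "'a set \<Rightarrow> 'a set set \<Rightarrow> bool" where
  "connected_graph V E \<longleftrightarrow> V \<noteq> {} \<and>
     (\<forall>u\<in>V. \<forall>v\<in>V. \<exists>p. is_path V E p \<and> hd p = u \<and> last p = v)"

definition proper_edge_colouring :: "'a set set \<Rightarrow> ('a set \<Rightarrow> nat) \<Rightarrow> nat \<Rightarrow> bool" where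
  "proper_edge_colouring E c k \<longleftrightarrow> c ` E \<subseteq> {..<k} \<and>
     (\<forall>e1\<in>E. \<forall>e2\<in>E. e1 \<noteq> e2 \<and> e1 \<inter> e2 \<noteq> {} \<longrightarrow> c e1 \<noteq> c e2)"

definition rainbow_path :: "'a set \<Rightarrow> 'a set set \<Rightarrow> ('a set \<Rightarrow> nat) \<Rightarrow> 'a list \<Rightarrow> bool" where
  "rainbow_path V E c p \<longleftrightarrow> is_path V E p \<and> distinct (map c (path_edges p))"

definition rainbow_connected :: "'a set \<Rightarrow> 'a set set \<Rightarrow> ('a set \<Rightarrow> nat) \<Rightarrow> bool" where
  "rainbow_connected V E c \<longleftrightarrow>
     (\<forall>u\<in>V. \<forall>v\<in>V. u \<noteq> v \<longrightarrow> (\<exists>p. rainbow_path V E c p \<and> hd p = u \<and> last p = v))"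

definition chromatic_index :: "'a set set \<Rightarrow> nat" where
  "chromatic_index E = (LEAST k. \<exists>c. proper_edge_colouring E c k)"

definition proper_rainbow_connection_number :: "'a set \<Rightarrow> 'a set set \<Rightarrow> nat" where
  "proper_rainbow_connection_number V E =
     (LEAST k. \<exists>c. proper_edge_colouring E c k \<and> rainbow_connected V E c)"

end

theory Submission
  imports Defs
begin

lemma is_path_Cons2: "is_path V E (u#w#p) \<longleftrightarrow> {u,w}\<in>E \<and> u\<in>V \<and> u\<notin>set(w#p) \<and> is_path V E (w#p)"
  unfolding is_path_def
  apply (auto simp: nth_Cons split: nat.splits)
  done
lemma is_path_single: "is_path V E [u] \<longleftrightarrow> u\<in>V"
  unfolding is_path_def by auto
lemma path_edges_Cons2: "path_edges (u#w#p) = {u,w} # path_edges (w#p)"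
  unfolding path_edges_def by (simp add: upt_conv_Cons map_Suc_upt[symmetric] del: upt_Suc)
lemma path_edges_single: "path_edges [u] = []"
  unfolding path_edges_def by simp


lemma pick2:
  assumes "finite S" "card {u\<in>S. P u} + card {u\<in>S. Q u} < card S"
  shows "\<exists>u\<in>S. \<not> P u \<and> \<not> Q u"
proof (rule ccontr)
  assume "\<not> ?thesis"
  then have "S \<subseteq> {u\<in>S. P u} \<union> {u\<in>S. Q u}" by auto
  then have "card S \<le> card ({u\<in>S. P u} \<union> {u\<in>S. Q u})"
    using assms(1) by (intro card_mono) auto
  also have "\<dots> \<le> card {u\<in>S. P u} + card {u\<in>S. Q u}" by (rule card_Un_le)
  finally show False using assms(2) by simp
qed

lemma leaving:
  "is_path V E p \<Longrightarrow> hd p \<in> S \<Longrightarrow> last p \<notin> S \<Longrightarrow> \<exists>s t. s\<in>S \<and> t\<notin>S \<and> {s,t}\<in>E"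
proof (induction p)
  case Nil then show ?case by (simp add: is_path_def)
next
  case (Cons u p)
  show ?case
  proof (cases p)
    case Nil then show ?thesis using Cons by simp
  next
    case (Cons w q)
    show ?thesis
    proof (cases "w \<in> S")
      case True
      then show ?thesis using Cons.IH Cons.prems \<open>p = w#q\<close> by (simp add: is_path_Cons2)
    next
      case False
      then show ?thesis using Cons.prems \<open>p = w#q\<close> by (auto simp: is_path_Cons2)
    qed
  qed
qed

locale GG =
  fixes V :: "'a set" and E c m
  assumes sg: "simple_graph V E" and conn: "connected_graph V E"
    and deg: "\<forall>v\<in>V. card V + 3 \<le> 3 * degree E v"
    and pc: "proper_edge_colouring E c m"
begin

definition N where "N v = {u. {u,v}\<in>E}"

lemma edge_in: "{u,v}\<in>E \<Longrightarrow> u\<in>V \<and> v\<in>V \<and> u\<noteq>v"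
  using sg unfolding simple_graph_def by (force simp: doubleton_eq_iff)

lemma finV: "finite V" using sg unfolding simple_graph_def by auto

lemma N_sub: "N v \<subseteq> V" using edge_in unfolding N_def by auto
lemma N_fin: "finite (N v)" using N_sub finV finite_subset by blast
lemma N_sym: "u \<in> N v \<longleftrightarrow> v \<in> N u" unfolding N_def by (simp add: insert_commute)
lemma N_irr: "v \<notin> N v" using edge_in[of v v] unfolding N_def by auto
lemma N_E: "u \<in> N v \<Longrightarrow> {u,v} \<in> E" unfolding N_def by auto
lemma N_E': "u \<in> N v \<Longrightarrow> {v,u} \<in> E" unfolding N_def by (auto simp: insert_commute)
lemma degN: "v\<in>V \<Longrightarrow> card V + 3 \<le> 3 * card (N v)"
  using deg unfolding N_def degree_def by auto

lemma cne: "e1\<in>E \<Longrightarrow> e2\<in>E \<Longrightarrow> e1\<noteq>e2 \<Longrightarrow> z\<in>e1 \<Longrightarrow> z\<in>e2 \<Longrightarrow> c e1 \<noteq> c e2"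
  using pc unfolding proper_edge_colouring_def by blast

lemma few:
  assumes "S \<subseteq> N v" "finite C"
  shows "card {u\<in>S. c {u,v} \<in> C} \<le> card C"
proof -
  have "inj_on (\<lambda>u. c {u,v}) {u\<in>S. c {u,v} \<in> C}"
  proof (rule inj_onI)
    fix u1 u2 assume h: "u1 \<in> {u\<in>S. c {u,v} \<in> C}" "u2 \<in> {u\<in>S. c {u,v} \<in> C}" "c {u1,v} = c {u2,v}"
    show "u1 = u2"
    proof (rule ccontr)
      assume "u1 \<noteq> u2"
      then have "{u1,v} \<noteq> {u2,v}" by (auto simp: doubleton_eq_iff)
      moreover have "{u1,v}\<in>E" "{u2,v}\<in>E" using h assms(1) N_E by auto
      ultimately show False using cne h(3) by blast
    qed
  qed
  then show ?thesis using assms(2) by (intro card_inj_on_le) auto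
qed

end


context GG begin

lemma cardU: "S \<subseteq> A \<union> B \<Longrightarrow> finite A \<Longrightarrow> finite B \<Longrightarrow> card S \<le> card A + card B"
  by (meson card_Un_le card_mono finite_UnI le_trans)

lemma cardU3: "S \<subseteq> A \<union> (B \<union> C) \<Longrightarrow> finite A \<Longrightarrow> finite B \<Longrightarrow> finite C \<Longrightarrow> card S \<le> card A + (card B + card C)"
  using cardU[of S A "B \<union> C"] card_Un_le[of B C] by auto

lemma ce: "e1\<in>E \<Longrightarrow> e2\<in>E \<Longrightarrow> z\<in>e1 \<Longrightarrow> z\<in>e2 \<Longrightarrow> e1\<noteq>e2 \<Longrightarrow> c e1 \<noteq> c e2"
  using cne by blast

lemma main:
  assumes xV: "x\<in>V" and yV: "y\<in>V" and xy: "x\<noteq>y"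
  shows "\<exists>p. rainbow_path V E c p \<and> hd p = x \<and> last p = y"
proof -
  note simps = rainbow_path_def is_path_Cons2 is_path_single path_edges_Cons2 path_edges_single
  consider (A) "{x,y}\<in>E" | (B) "\<exists>w. w\<in>N x \<and> w\<in>N y" | (C) "{x,y}\<notin>E" "N x \<inter> N y = {}" by blast
  then show ?thesis
  proof cases
    case A
    then show ?thesis by (intro exI[of _ "[x,y]"]) (simp add: simps xV yV xy)
  next
    case B
    then obtain w where w: "w\<in>N x" "w\<in>N y" by blast
    have e1: "{x,w}\<in>E" using w N_E' by blast
    have e2: "{w,y}\<in>E" using w N_E by blast
    have "w\<noteq>x" "w\<noteq>y" using w N_irr by auto
    moreover have "c{x,w} \<noteq> c{w,y}" using ce[OF e1 e2, of w] xy by (auto simp: doubleton_eq_iff)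
    ultimately show ?thesis using e1 e2 xV yV xy
      by (intro exI[of _ "[x,w,y]"]) (auto simp: simps dest: edge_in)
  next
    case C
    define X where "X = N x"
    define Y where "Y = N y"
    define R where "R = V - ({x,y} \<union> X \<union> Y)"
    have XY: "X \<inter> Y = {}" using C X_def Y_def by auto
    have xX: "x\<notin>X" "y\<notin>Y" using N_irr X_def Y_def by auto
    have xY: "x\<notin>Y" "y\<notin>X" using C(1) X_def Y_def N_E N_E' by auto
    have XV: "X\<subseteq>V" "Y\<subseteq>V" using N_sub X_def Y_def by auto
    have finX: "finite X" "finite Y" "finite R" using N_fin X_def Y_def R_def finV by auto
    have cardR: "card R + 2 + card X + card Y = card V"
    proof -
      have "card ({x,y} \<union> X \<union> Y) = card ({x,y} \<union> X) + card Y"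
        using XY xY xX finX by (intro card_Un_disjoint) auto
      also have "card ({x,y} \<union> X) = card {x,y} + card X"
        using xX xY finX by (intro card_Un_disjoint) auto
      finally have h: "card ({x,y} \<union> X \<union> Y) = 2 + card X + card Y" using xy by simp
      have "{x,y}\<union>X\<union>Y \<subseteq> V" using XV xV yV by auto
      then have "card R = card V - card ({x,y} \<union> X \<union> Y)"
        unfolding R_def by (meson card_Diff_subset finite_subset finV)
      moreover have "card ({x,y} \<union> X \<union> Y) \<le> card V"
        using \<open>{x,y}\<union>X\<union>Y \<subseteq> V\<close> finV card_mono by blast
      ultimately show ?thesis using h by simp
    qed
    have dX: "card V + 3 \<le> 3*card X" "card V + 3 \<le> 3*card Y" using degN X_def Y_def xV yV by auto
    have Rmem: "\<And>v. v\<in>R \<longleftrightarrow> v\<in>V \<and> v\<noteq>x \<and> v\<noteq>y \<and> v\<notin>X \<and> v\<notin>Y" unfolding R_def by auto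
    have nV: "\<And>u v. u \<in> N v \<Longrightarrow> u\<in>V" using N_sub by auto
    have NX: "\<And>u. u\<in>X \<longleftrightarrow> x \<in> N u" "\<And>u. u\<in>Y \<longleftrightarrow> y \<in> N u" using X_def Y_def N_sym by auto

    consider (C1) "\<exists>a b. a\<in>X \<and> b\<in>Y \<and> {a,b}\<in>E" | (C2) "\<not>(\<exists>a b. a\<in>X \<and> b\<in>Y \<and> {a,b}\<in>E)" by blast
    then show ?thesis
    proof cases
      case C1
      then obtain a b where ab: "a\<in>X" "b\<in>Y" "{a,b}\<in>E" by blast
      have abne: "a\<noteq>x" "a\<noteq>y" "b\<noteq>x" "b\<noteq>y" "a\<noteq>b" using ab xX xY XY by auto
      have exa: "{x,a}\<in>E" using ab X_def N_E' by auto
      have eby: "{b,y}\<in>E" using ab Y_def N_E by auto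
      have c1: "c{x,a} \<noteq> c{a,b}" using ce[OF exa ab(3), of a] abne by (auto simp: doubleton_eq_iff)
      have c2: "c{a,b} \<noteq> c{b,y}" using ce[OF ab(3) eby, of b] abne by (auto simp: doubleton_eq_iff)
      show ?thesis
      proof (cases "c{x,a} \<noteq> c{b,y}")
        case True
        then show ?thesis using exa eby ab abne xV yV xy c1 c2
          by (intro exI[of _ "[x,a,b,y]"]) (auto simp: simps dest: edge_in)
      next
        case False
        then have cab: "c{x,a} = c{b,y}" by simp
        show ?thesis
        proof (cases "\<exists>b'\<in>N a \<inter> Y. b'\<noteq>b")
          case True
          then obtain b' where b': "b'\<in>N a" "b'\<in>Y" "b'\<noteq>b" by blast
          have eab': "{a,b'}\<in>E" using b' N_E' by auto
          have eb'y: "{b',y}\<in>E" using b' Y_def N_E by auto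
          have b'ne: "b'\<noteq>x" "b'\<noteq>y" "a\<noteq>b'" using b' xY xX XY ab by auto
          have "c{b',y} \<noteq> c{b,y}" using ce[OF eb'y eby, of y] b' by (auto simp: doubleton_eq_iff)
          moreover have "c{x,a} \<noteq> c{a,b'}" using ce[OF exa eab', of a] b'ne abne by (auto simp: doubleton_eq_iff)
          moreover have "c{a,b'} \<noteq> c{b',y}" using ce[OF eab' eb'y, of b'] b'ne abne by (auto simp: doubleton_eq_iff)
          ultimately show ?thesis using exa eab' eb'y ab abne b'ne xV yV xy cab
            by (intro exI[of _ "[x,a,b',y]"]) (auto simp: simps dest: edge_in)
        next
          case False
          have "N a \<subseteq> {x,b} \<union> ((N a \<inter> X) \<union> R)"
          proof
            fix u assume u: "u \<in> N a"
            have "u \<noteq> y" using u NX(2) ab XY by (auto simp: N_sym)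
            then show "u \<in> {x,b} \<union> ((N a \<inter> X) \<union> R)" using u False nV[OF u] Rmem by auto
          qed
          then have "card (N a) \<le> card {x,b} + (card (N a \<inter> X) + card R)"
            using finX N_fin by (intro cardU3) auto
          moreover have "card {x,b} \<le> 2" by (simp add: card_insert_if)
          moreover have "card V + 3 \<le> 3 * card (N a)" using degN ab XV by auto
          ultimately have big: "card (N a \<inter> X) \<ge> 3" using cardR dX by linarith
          have "card {u \<in> N a \<inter> X. c{u,x} \<in> {c{a,b}}} \<le> card {c{a,b}}"
            using X_def by (intro few) auto
          then have "card {u \<in> N a \<inter> X. c{u,x} \<in> {c{a,b}}} + card {u \<in> N a \<inter> X. False} < card (N a \<inter> X)"
            using big by simp
          then have "\<exists>a'\<in>N a \<inter> X. \<not> (c{a',x} \<in> {c{a,b}}) \<and> \<not> False" by (rule pick2[OF finite_Int[OF disjI1, OF N_fin]])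
          then obtain a' where a': "a' \<in> N a" "a'\<in>X" "c{a',x} \<noteq> c{a,b}" by blast
          have a'ne: "a'\<noteq>a" "a'\<noteq>x" "a'\<noteq>y" "a'\<noteq>b" using a' N_irr xX xY XY ab by auto
          have exa': "{x,a'}\<in>E" using a' X_def N_E' by auto
          have ea'a: "{a',a}\<in>E" using a' N_E by auto
          have "c{x,a'} \<noteq> c{a',a}" using ce[OF exa' ea'a, of a'] a'ne abne by (auto simp: doubleton_eq_iff)
          moreover have "c{x,a'} \<noteq> c{a,b}" using a'(3) by (simp add: insert_commute)
          moreover have "c{x,a'} \<noteq> c{b,y}" using ce[OF exa' exa, of x] a'ne cab by (auto simp: doubleton_eq_iff)
          moreover have "c{a',a} \<noteq> c{a,b}" using ce[OF ea'a ab(3), of a] a'ne abne by (auto simp: doubleton_eq_iff)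
          moreover have "c{a',a} \<noteq> c{b,y}" using ce[OF ea'a exa, of a] a'ne abne cab by (auto simp: doubleton_eq_iff)
          ultimately show ?thesis using exa' ea'a ab eby abne a'ne xV yV xy c2 a'
            by (intro exI[of _ "[x,a',a,b,y]"]) (auto simp: simps dest: edge_in)
        qed
      qed
    next
      case C2
      have noXY: "\<And>u v. u\<in>X \<Longrightarrow> v \<in> N u \<Longrightarrow> v\<notin>Y"
        using C2 N_E' by blast
      have RN: "\<And>r. r\<in>R \<Longrightarrow> x \<notin> N r \<and> y \<notin> N r \<and> r \<notin> N r"
        using Rmem NX N_irr by auto
      consider (C2a) "\<exists>r\<in>R. N r \<inter> X \<noteq> {} \<and> N r \<inter> Y \<noteq> {}" | (C2b) "\<not>(\<exists>r\<in>R. N r \<inter> X \<noteq> {} \<and> N r \<inter> Y \<noteq> {})" by blast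
      then show ?thesis
      proof cases
        case C2a
        then obtain r where r: "r\<in>R" "N r \<inter> X \<noteq> {}" "N r \<inter> Y \<noteq> {}" by blast
        have rne: "r\<noteq>x" "r\<noteq>y" "r\<notin>X" "r\<notin>Y" "r\<in>V" using r Rmem by auto
        have "N r \<subseteq> (N r \<inter> X) \<union> ((N r \<inter> Y) \<union> (R - {r}))"
          using RN[OF r(1)] nV Rmem by auto
        then have "card (N r) \<le> card (N r \<inter> X) + (card (N r \<inter> Y) + card (R - {r}))"
          using finX N_fin by (intro cardU3) auto
        moreover have "card (R - {r}) = card R - 1" using r by simp
        moreover have "card V + 3 \<le> 3 * card (N r)" using degN rne by auto
        moreover have "card R \<ge> 1" using r finX card_0_eq by fastforce
        ultimately have six: "card (N r \<inter> X) + card (N r \<inter> Y) \<ge> 6" using cardR dX by linarith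
        have fA: "finite (N r \<inter> X)" "finite (N r \<inter> Y)" using N_fin by auto
        have AB: "\<And>a. a \<in> N r \<inter> X \<Longrightarrow> {x,a}\<in>E \<and> {a,r}\<in>E \<and> a\<noteq>x \<and> a\<noteq>y \<and> a\<noteq>r \<and> a \<in> V"
          using X_def N_E N_E' xX xY rne nV by auto
        have BB: "\<And>b. b \<in> N r \<inter> Y \<Longrightarrow> {r,b}\<in>E \<and> {b,y}\<in>E \<and> b\<noteq>x \<and> b\<noteq>y \<and> b\<noteq>r \<and> b \<in> V"
          using Y_def N_E N_E' xX xY rne nV by auto
        have ABne: "\<And>a b. a \<in> N r \<inter> X \<Longrightarrow> b \<in> N r \<inter> Y \<Longrightarrow> a \<noteq> b" using XY by auto
        have direct: "\<exists>p. rainbow_path V E c p \<and> hd p = x \<and> last p = y"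
          if a: "a \<in> N r \<inter> X" and b: "b \<in> N r \<inter> Y"
            and h1: "c{x,a} \<noteq> c{r,b}" and h2: "c{x,a} \<noteq> c{b,y}" and h3: "c{a,r} \<noteq> c{b,y}" for a b
        proof -
          note A = AB[OF a] and B = BB[OF b] and ne = ABne[OF a b]
          have "c{x,a} \<noteq> c{a,r}" using ce[of "{x,a}" "{a,r}" a] A rne by (auto simp: doubleton_eq_iff)
          moreover have "c{a,r} \<noteq> c{r,b}" using ce[of "{a,r}" "{r,b}" r] A B ne by (auto simp: doubleton_eq_iff)
          moreover have "c{r,b} \<noteq> c{b,y}" using ce[of "{r,b}" "{b,y}" b] A B rne by (auto simp: doubleton_eq_iff)
          ultimately show ?thesis using A B ne h1 h2 h3 rne xV yV xy
            by (intro exI[of _ "[x,a,r,b,y]"]) (auto simp: simps)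
        qed
        consider (q4) "card (N r \<inter> Y) \<ge> 4" | (p4) "card (N r \<inter> X) \<ge> 4" | (pq3) "card (N r \<inter> X) \<ge> 3" "card (N r \<inter> Y) \<ge> 1"
          using six by linarith
        then show ?thesis
        proof cases
          case q4
          obtain a where a: "a \<in> N r \<inter> X" using r by blast
          have "card {b \<in> N r \<inter> Y. c{b,r} \<in> {c{x,a}}} \<le> card {c{x,a}}" by (intro few) auto
          moreover have "card {b \<in> N r \<inter> Y. c{b,y} \<in> {c{x,a}, c{a,r}}} \<le> card {c{x,a}, c{a,r}}"
            using Y_def by (intro few) auto
          moreover have "card {c{x,a}, c{a,r}} \<le> 2" by (simp add: card_insert_if)
          ultimately have "card {b \<in> N r \<inter> Y. c{b,r} \<in> {c{x,a}}} + card {b \<in> N r \<inter> Y. c{b,y} \<in> {c{x,a}, c{a,r}}} < card (N r \<inter> Y)"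
            using q4 by simp
          then have "\<exists>b\<in>N r \<inter> Y. \<not> (c{b,r} \<in> {c{x,a}}) \<and> \<not> (c{b,y} \<in> {c{x,a}, c{a,r}})" by (rule pick2[OF fA(2)])
          then obtain b where "b \<in> N r \<inter> Y" "c{b,r} \<notin> {c{x,a}}" "c{b,y} \<notin> {c{x,a}, c{a,r}}" by blast
          then show ?thesis using direct[OF a] by (auto simp: insert_commute)
        next
          case p4
          obtain b where b: "b \<in> N r \<inter> Y" using r by blast
          have "card {a \<in> N r \<inter> X. c{a,x} \<in> {c{r,b}, c{b,y}}} \<le> card {c{r,b}, c{b,y}}"
            using X_def by (intro few) auto
          moreover have "card {a \<in> N r \<inter> X. c{a,r} \<in> {c{b,y}}} \<le> card {c{b,y}}" by (intro few) auto
          moreover have "card {c{r,b}, c{b,y}} \<le> 2" by (simp add: card_insert_if)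
          ultimately have "card {a \<in> N r \<inter> X. c{a,x} \<in> {c{r,b}, c{b,y}}} + card {a \<in> N r \<inter> X. c{a,r} \<in> {c{b,y}}} < card (N r \<inter> X)"
            using p4 by simp
          then have "\<exists>a\<in>N r \<inter> X. \<not> (c{a,x} \<in> {c{r,b}, c{b,y}}) \<and> \<not> (c{a,r} \<in> {c{b,y}})" by (rule pick2[OF fA(1)])
          then obtain a where "a \<in> N r \<inter> X" "c{a,x} \<notin> {c{r,b}, c{b,y}}" "c{a,r} \<notin> {c{b,y}}" by blast
          then show ?thesis using direct[OF _ b] by (auto simp: insert_commute)
        next
          case pq3
          obtain b where b: "b \<in> N r \<inter> Y" using pq3 fA card_0_eq by fastforce
          have "card {a \<in> N r \<inter> X. c{a,r} \<in> {c{b,y}}} \<le> card {c{b,y}}" by (intro few) auto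
          then have "card {a \<in> N r \<inter> X. c{a,r} \<in> {c{b,y}}} + card {a \<in> N r \<inter> X. False} < card (N r \<inter> X)"
            using pq3 by simp
          then have "\<exists>a\<in>N r \<inter> X. \<not> (c{a,r} \<in> {c{b,y}}) \<and> \<not> False" by (rule pick2[OF fA(1)])
          then obtain a where a: "a \<in> N r \<inter> X" "c{a,r} \<noteq> c{b,y}" by blast
          show ?thesis
          proof (cases "c{x,a} \<noteq> c{r,b} \<and> c{x,a} \<noteq> c{b,y}")
            case True
            then show ?thesis using direct[OF a(1) b] a(2) by auto
          next
            case False
            note A = AB[OF a(1)] and B = BB[OF b] and ne = ABne[OF a(1) b]
            define z where "z = c{x,a}"
            have zin: "z \<in> {c{r,b}, c{b,y}}" using False z_def by auto
            have "N a \<subseteq> {x} \<union> ((N a \<inter> X) \<union> R)"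
            proof
              fix u assume u: "u \<in> N a"
              have "u \<noteq> y" using u NX(2) a XY by (auto simp: N_sym)
              moreover have "u \<notin> Y" using noXY u a by auto
              ultimately show "u \<in> {x} \<union> ((N a \<inter> X) \<union> R)" using u nV[OF u] Rmem by auto
            qed
            then have "card (N a) \<le> card {x} + (card (N a \<inter> X) + card R)"
              using finX N_fin by (intro cardU3) auto
            moreover have "card V + 3 \<le> 3 * card (N a)" using degN A by auto
            ultimately have big: "card (N a \<inter> X) \<ge> 4" using cardR dX by simp
            have "card {u \<in> N a \<inter> X. c{u,x} \<in> {c{a,r}, c{r,b}, c{b,y}} - {z}} \<le> card ({c{a,r}, c{r,b}, c{b,y}} - {z})"
              using X_def by (intro few) auto
            moreover have "card ({c{a,r}, c{r,b}, c{b,y}} - {z}) \<le> 2"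
              using zin by (auto simp: card_insert_if)
            moreover have "card {u \<in> N a \<inter> X. c{u,a} \<in> {c{r,b}, c{b,y}} - {z}} \<le> card ({c{r,b}, c{b,y}} - {z})"
              by (intro few) auto
            moreover have "card ({c{r,b}, c{b,y}} - {z}) \<le> 1"
              using zin by (auto simp: card_insert_if)
            ultimately have "card {u \<in> N a \<inter> X. c{u,x} \<in> {c{a,r}, c{r,b}, c{b,y}} - {z}} + card {u \<in> N a \<inter> X. c{u,a} \<in> {c{r,b}, c{b,y}} - {z}} < card (N a \<inter> X)"
              using big by linarith
            then have "\<exists>a'\<in>N a \<inter> X. \<not> (c{a',x} \<in> {c{a,r}, c{r,b}, c{b,y}} - {z}) \<and> \<not> (c{a',a} \<in> {c{r,b}, c{b,y}} - {z})" by (rule pick2[OF finite_Int[OF disjI1, OF N_fin]])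
            then obtain a' where a': "a' \<in> N a" "a' \<in> X" "c{a',x} \<notin> {c{a,r}, c{r,b}, c{b,y}} - {z}" "c{a',a} \<notin> {c{r,b}, c{b,y}} - {z}" by blast
            have a'ne: "a'\<noteq>a" "a'\<noteq>x" "a'\<noteq>y" "a'\<noteq>b" "a'\<noteq>r" using a' N_irr xX xY XY b rne by auto
            have exa': "{x,a'}\<in>E" using a' X_def N_E' by auto
            have ea'a: "{a',a}\<in>E" using a' N_E by auto
            have "c{x,a'} \<noteq> z" unfolding z_def using ce[of "{x,a'}" "{x,a}" x] exa' A a'ne by (auto simp: doubleton_eq_iff)
            then have cx: "c{x,a'} \<notin> {c{a,r}, c{r,b}, c{b,y}}" using a'(3) by (auto simp: insert_commute)
            have "c{a',a} \<noteq> z" unfolding z_def using ce[of "{a',a}" "{x,a}" a] ea'a A a'ne by (auto simp: doubleton_eq_iff)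
            then have ca: "c{a',a} \<notin> {c{r,b}, c{b,y}}" using a'(4) by auto
            have "c{x,a'} \<noteq> c{a',a}" using ce[OF exa' ea'a, of a'] a'ne A by (auto simp: doubleton_eq_iff)
            moreover have "c{a',a} \<noteq> c{a,r}" using ce[of "{a',a}" "{a,r}" a] ea'a A a'ne by (auto simp: doubleton_eq_iff)
            moreover have "c{a,r} \<noteq> c{r,b}" using ce[of "{a,r}" "{r,b}" r] A B ne by (auto simp: doubleton_eq_iff)
            moreover have "c{r,b} \<noteq> c{b,y}" using ce[of "{r,b}" "{b,y}" b] A B rne by (auto simp: doubleton_eq_iff)
            ultimately show ?thesis using A B ne a a' nV[OF a'(1)] a'ne cx ca exa' ea'a rne xV yV xy
              by (intro exI[of _ "[x,a',a,r,b,y]"]) (auto simp: simps)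
          qed
        qed
      next
        case C2b
        define RX where "RX = {r\<in>R. N r \<inter> X \<noteq> {}}"
        define S where "S = {x} \<union> X \<union> RX"
        obtain p where p: "is_path V E p" "hd p = x" "last p = y"
          using conn xV yV unfolding connected_graph_def by blast
        have "y \<notin> S" using xy xY Rmem unfolding S_def RX_def by auto
        moreover have "x \<in> S" unfolding S_def by auto
        ultimately obtain s t where st: "s\<in>S" "t\<notin>S" "{s,t}\<in>E"
          using leaving[OF p(1)] p by metis
        have tNs: "t \<in> N s" "s \<in> N t" using st(3) unfolding N_def by (auto simp: insert_commute)
        have sV: "s\<in>V" "t\<in>V" "s\<noteq>t" using edge_in[OF st(3)] by auto
        have "s \<noteq> x"
        proof
          assume "s = x" then have "t \<in> X" using tNs X_def N_sym by auto
          then show False using st unfolding S_def by auto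
        qed
        moreover have "s \<notin> X"
        proof
          assume sX: "s \<in> X"
          have "t \<notin> Y" using noXY[OF sX tNs(1)] .
          moreover have "t \<noteq> y" using sX tNs NX XY by auto
          moreover have "t \<noteq> x" "t \<notin> X" using st unfolding S_def by auto
          ultimately have "t \<in> R" using Rmem sV by auto
          then have "t \<in> RX" using tNs sX unfolding RX_def by auto
          then show False using st unfolding S_def by auto
        qed
        ultimately have sRX: "s \<in> R" "N s \<inter> X \<noteq> {}" using st(1) unfolding S_def RX_def by auto
        have sY: "N s \<inter> Y = {}" using C2b sRX by auto
        have tR: "t \<in> R"
        proof -
          have "t \<noteq> x" "t \<notin> X" using st unfolding S_def by auto
          moreover have "t \<noteq> y" using tNs sRX Rmem NX by auto
          moreover have "t \<notin> Y" using tNs sY by auto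
          ultimately show ?thesis using Rmem sV by auto
        qed
        have tX: "N t \<inter> X = {}" using tR st unfolding S_def RX_def by auto
        have degs: "card V + 3 \<le> 3 * card (N s)" "card V + 3 \<le> 3 * card (N t)" using degN sV by auto
        have "N s \<subseteq> (N s \<inter> X) \<union> (R - {s})" using RN[OF sRX(1)] nV Rmem sY by auto
        then have "card (N s) \<le> card (N s \<inter> X) + card (R - {s})"
          using finX N_fin by (intro cardU) auto
        moreover have "card (R - {s}) = card R - 1" using sRX by simp
        moreover have "card R \<ge> 1" using sRX finX card_0_eq by fastforce
        ultimately have sixa: "card (N s \<inter> X) \<ge> 6" using cardR dX degs card.empty by linarith
        have "N t \<subseteq> (N t \<inter> Y) \<union> (R - {t})" using RN[OF tR] nV Rmem tX by auto
        then have "card (N t) \<le> card (N t \<inter> Y) + card (R - {t})"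
          using finX N_fin by (intro cardU) auto
        moreover have "card (R - {t}) = card R - 1" using tR by simp
        moreover have "card R \<ge> 1" using tR finX card_0_eq by fastforce
        ultimately have sixb: "card (N t \<inter> Y) \<ge> 6" using cardR dX degs card.empty by linarith
        have fAB: "finite (N s \<inter> X)" "finite (N t \<inter> Y)" using N_fin by auto
        have "card {b \<in> N t \<inter> Y. c{b,y} \<in> {c{s,t}}} \<le> card {c{s,t}}" using Y_def by (intro few) auto
        then have "card {b \<in> N t \<inter> Y. c{b,y} \<in> {c{s,t}}} + card {b \<in> N t \<inter> Y. False} < card (N t \<inter> Y)"
          using sixb by simp
        then have "\<exists>b\<in>N t \<inter> Y. \<not> (c{b,y} \<in> {c{s,t}}) \<and> \<not> False" by (rule pick2[OF fAB(2)])
        then obtain b where b: "b \<in> N t" "b \<in> Y" "c{b,y} \<noteq> c{s,t}" by blast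
        have "card {a \<in> N s \<inter> X. c{a,x} \<in> {c{s,t}, c{t,b}, c{b,y}}} \<le> card {c{s,t}, c{t,b}, c{b,y}}"
          using X_def by (intro few) auto
        moreover have "card {a \<in> N s \<inter> X. c{a,s} \<in> {c{t,b}, c{b,y}}} \<le> card {c{t,b}, c{b,y}}"
          by (intro few) auto
        moreover have "card {c{s,t}, c{t,b}, c{b,y}} \<le> 3" "card {c{t,b}, c{b,y}} \<le> 2"
          by (simp_all add: card_insert_if)
        ultimately have "card {a \<in> N s \<inter> X. c{a,x} \<in> {c{s,t}, c{t,b}, c{b,y}}} + card {a \<in> N s \<inter> X. c{a,s} \<in> {c{t,b}, c{b,y}}} < card (N s \<inter> X)"
          using sixa by linarith
        then have "\<exists>a\<in>N s \<inter> X. \<not> (c{a,x} \<in> {c{s,t}, c{t,b}, c{b,y}}) \<and> \<not> (c{a,s} \<in> {c{t,b}, c{b,y}})"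
          by (rule pick2[OF fAB(1)])
        then obtain a where a: "a \<in> N s" "a \<in> X" "c{a,x} \<notin> {c{s,t}, c{t,b}, c{b,y}}" "c{a,s} \<notin> {c{t,b}, c{b,y}}"
          by blast
        have ane: "a \<noteq> x" "a \<noteq> y" "a \<noteq> s" "a \<noteq> t" "a \<noteq> b" "a \<in> V"
          using a xX xY sRX tR Rmem XY b nV by auto
        have bne: "b \<noteq> x" "b \<noteq> y" "b \<noteq> s" "b \<noteq> t" "b \<in> V"
          using b xX xY sRX tR Rmem nV by auto
        have stne: "s \<noteq> x" "s \<noteq> y" "t \<noteq> x" "t \<noteq> y" using sRX tR Rmem by auto
        have exa: "{x,a}\<in>E" using a X_def N_E' by auto
        have eas: "{a,s}\<in>E" using a N_E by auto
        have etb: "{t,b}\<in>E" using b N_E' by auto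
        have eby: "{b,y}\<in>E" using b Y_def N_E by auto
        have "c{x,a} \<noteq> c{a,s}" using ce[OF exa eas, of a] ane stne by (auto simp: doubleton_eq_iff)
        moreover have "c{a,s} \<noteq> c{s,t}" using ce[OF eas st(3), of s] ane sV by (auto simp: doubleton_eq_iff)
        moreover have "c{s,t} \<noteq> c{t,b}" using ce[OF st(3) etb, of t] bne sV by (auto simp: doubleton_eq_iff)
        moreover have "c{t,b} \<noteq> c{b,y}" using ce[OF etb eby, of b] bne stne by (auto simp: doubleton_eq_iff)
        moreover have "c{x,a} \<notin> {c{s,t}, c{t,b}, c{b,y}}" using a(3) by (simp add: insert_commute)
        ultimately show ?thesis using a b ane bne stne sV exa eas etb eby st(3) xV yV xy
          by (intro exI[of _ "[x,a,s,t,b,y]"]) (auto simp: simps)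
      qed
    qed
  qed
qed

end

theorem proposition5p12:
  fixes V :: "'a set" and E :: "'a set set" and k :: int
  assumes "simple_graph V E"
    and "connected_graph V E"
    and "card V \<ge> 9"
    and "k \<ge> 3"
    and "\<forall>v\<in>V. real (degree E v) \<ge> (real (card V) + real_of_int k) / 3"
  shows "proper_rainbow_connection_number V E = chromatic_index E"
proof -
  have deg3: "\<forall>v\<in>V. card V + 3 \<le> 3 * degree E v"
  proof
    fix v assume "v \<in> V"
    then have "real (degree E v) \<ge> (real (card V) + real_of_int k) / 3" using assms(5) by blast
    moreover have "real_of_int k \<ge> 3" using assms(4) by simp
    ultimately have "real (card V + 3) \<le> real (3 * degree E v)" by simp
    then show "card V + 3 \<le> 3 * degree E v" by linarith
  qed
  have rc: "rainbow_connected V E c" if pc: "proper_edge_colouring E c m" for c m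
  proof -
    interpret GG V E c m using assms(1,2) deg3 pc by unfold_locales
    show ?thesis unfolding rainbow_connected_def using main by blast
  qed
  have "(\<lambda>k. \<exists>c. proper_edge_colouring E c k \<and> rainbow_connected V E c) = (\<lambda>k. \<exists>c. proper_edge_colouring E c k)"
    using rc by blast
  then show ?thesis unfolding proper_rainbow_connection_number_def chromatic_index_def by simp
qed

end
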